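(* Let $IS$ be an ISRL with model $M$ and $\varphi$ a formula of the $A\bar BN$ fragment of EHS$^{+}$. If $I,I'$ are intervals of $M$ with $\mathrm{g}(I)=\mathrm{g}(I')$, then $MCT_I^\varphi=MCT_{I'}^\varphi$.
   Context: **Regular expressions.** For a finite alphabet $X$, $RE_X$ is the set of regular expressions $e ::= \emptyset \mid \epsilon \mid s \mid e;e \mid e+e \mid e^*$ with $s\in X$. $L(e)$ denotes the standard language of $e$. **ISRL.** Fix agents $A=\{0,\dots,m\}$ and a finite set $\mathit{Var}$ of propositional variables. An ISRL is $IS=(\{L_i\},\{l_i^0\},\{ACT_i\},\{P_i\},\{t_i\},\lambda)$ where, for each $i\in A$: - $L_i$ is a finite set of local states and $l_i^0\in L_i$; - $ACT_i$ is a finite set of actions and $P_i:L_i\to 2^{ACT_i}$; - $t_i\subseteq L_i\times ACT\times L_i$, with $ACT=ACT_0\times\dots\times ACT_m$; - $\lambda:\mathit{Var}\to RE_G$, where $G=L_0\times\dots\times L_m$. $t^G((l_0,\dots,l_m),(l'_0,\dots,l'_m))$ holds iff some $(a_0,\dots,a_m)\in ACT$ has $a_i\in P_i(l_i)$ and $(l_i,(a_0,\dots,a_m),l'_i)\in t_i$ for all $i$. **Model of $IS$.** - States $S$ are the nonempty sequences $g_0\dots g_k$ with $g_0=(l_0^0,\dots,l_m^0)$ and $t^G(g_j,g_{j+1})$ for all $j<k$. - $t(g_0\dots g_k,g'_0\dots g'_l)$ iff $l=k+1$ and $g_j=g'_j$ for all $j\le k$. - $g_0\dots g_k\sim_i g'_0\dots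 g'_l$ iff $g_k,g'_l$ have the same $i$-th component. - $\mathrm{g}(g_0\dots g_k)=g_k$. **Intervals.** An interval is a nonempty sequence $I=s_1\dots s_n$ of states with $t(s_j,s_{j+1})$; $\mathit{first}(I)=s_1$, $\mathit{last}(I)=s_n$, $\mathrm{g}(I)=\mathrm{g}(s_1)\dots\mathrm{g}(s_n)$, and $\mathit{pi}(I)$ iff $n=1$. **Relations.** - $I\sim_i I'$ iff $|I|=|I'|$ and the states are pointwise $\sim_i$-related; $\sim_\Gamma$ is the transitive closure of $\bigcup_{i\in\Gamma}\sim_i$. - $I R_A I'$ iff $\mathit{first}(I')=\mathit{last}(I)$. - $I R_{\bar B} I'$ iff $I'=II_1$ for some interval $I_1$. - $I R_N I'$ iff $t(\mathit{last}(I),\mathit{first}(I'))$. - $R_{K_i}=\sim_i$, $R_{C_\Gamma}=\sim_\Gamma$, $R_{\langle A\rangle}=R_A$, $R_{\langle\bar B\rangle}=R_{\bar B}$, $R_{\langle N\rangle}=R_N$. **$A\bar BN$ fragment of EHS$^{+}$.** Syntax: $\varphi::=\mathit{pi}\mid p\mid\neg\varphi\mid\varphi\wedge\varphi\mid K_i\varphi\mid C_\Gamma\varphi\mid\langle A\rangle\varphi\mid\langle\bar B\rangle\varphi\mid\langle N\rangle\varphi$. A top-level sub-formula of $\varphi$ is a sub-formula of the form $X\psi$ with $X$ one of these modalities that is not in the scope of any modality. **Automata.** For $p\in\mathit{Var}$ let $\mathcal A^p$ be the minimal complete deterministic finite automaton for $L(\lambda(p))$ over alphabet $G$. $\mathcal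 A_I$ maps each $p$ to the state of $\mathcal A^p$ reached after reading $\mathrm{g}(I)$. **Modal context tree.** $MCT_I^\varphi$ is defined by recursion on $\varphi$ as the pair consisting of: - the root label $(\mathrm{g}(\mathit{first}(I)),\mathrm{g}(\mathit{last}(I)),\mathit{pi}(I),\mathcal A_I)$; - for each top-level sub-formula $X\psi$ of $\varphi$, the set $\{MCT_{I'}^\psi : I R_X I'\}$. *)

theory Defs
  imports Main
begin

datatype 'a rexp = REmpty | REps | RAtom 'a | RSeq "'a rexp" "'a rexp"
  | RAlt "'a rexp" "'a rexp" | RStar "'a rexp"

inductive_set kstar :: "'a list set \<Rightarrow> 'a list set" for A where
  kstar_nil: "[] \<in> kstar A"
| kstar_app: "u \<in> A \<Longrightarrow> v \<in> kstar A \<Longrightarrow> u @ v \<in> kstar A"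

primrec lang :: "'a rexp \<Rightarrow> 'a list set" where
  "lang REmpty = {}"
| "lang REps = {[]}"
| "lang (RAtom s) = {[s]}"
| "lang (RSeq e f) = {u @ v |u v. u \<in> lang e \<and> v \<in> lang f}"
| "lang (RAlt e f) = lang e \<union> lang f"
| "lang (RStar e) = kstar (lang e)"

primrec ratoms :: "'a rexp \<Rightarrow> 'a set" where
  "ratoms REmpty = {}"
| "ratoms REps = {}"
| "ratoms (RAtom s) = {s}"
| "ratoms (RSeq e f) = ratoms e \<union> ratoms f"
| "ratoms (RAlt e f) = ratoms e \<union> ratoms f"
| "ratoms (RStar e) = ratoms e"

text \<open>Agents are 0..nag; local states of all agents live in a common type 'l
 (agent i uses the subset Ls i), actions in a common type 'act.  Global states
 and joint actions are lists of length nag+1.\<close>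

record ('l, 'act, 'v) isrl =
  nag :: nat
  Ls :: "nat \<Rightarrow> 'l set"
  l0 :: "nat \<Rightarrow> 'l"
  Acts :: "nat \<Rightarrow> 'act set"
  Prot :: "nat \<Rightarrow> 'l \<Rightarrow> 'act set"
  trans :: "nat \<Rightarrow> ('l \<times> 'act list \<times> 'l) set"
  lab :: "'v \<Rightarrow> 'l list rexp"

definition Gset :: "('l, 'act, 'v) isrl \<Rightarrow> 'l list set" where
  "Gset IS = {g. length g = Suc (nag IS) \<and> (\<forall>i\<le>nag IS. g ! i \<in> Ls IS i)}"

definition ACTset :: "('l, 'act, 'v) isrl \<Rightarrow> 'act list set" where
  "ACTset IS = {a. length a = Suc (nag IS) \<and> (\<forall>i\<le>nag IS. a ! i \<in> Acts IS i)}"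

definition wf_isrl :: "('l, 'act, 'v) isrl \<Rightarrow> bool" where
  "wf_isrl IS \<longleftrightarrow> finite (UNIV :: 'v set) \<and>
     (\<forall>i\<le>nag IS. finite (Ls IS i) \<and> l0 IS i \<in> Ls IS i \<and> finite (Acts IS i)
        \<and> (\<forall>l\<in>Ls IS i. Prot IS i l \<subseteq> Acts IS i)
        \<and> trans IS i \<subseteq> Ls IS i \<times> ACTset IS \<times> Ls IS i)
     \<and> (\<forall>p. ratoms (lab IS p) \<subseteq> Gset IS)"

definition tG :: "('l, 'act, 'v) isrl \<Rightarrow> 'l list \<Rightarrow> 'l list \<Rightarrow> bool" where
  "tG IS g g' \<longleftrightarrow> length g = Suc (nag IS) \<and> length g' = Suc (nag IS) \<and>
     (\<exists>a\<in>ACTset IS. \<forall>i\<le>nag IS. a ! i \<in> Prot IS i (g ! i) \<and> (g ! i, a, g' ! i) \<in> trans IS i)"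

definition ginit :: "('l, 'act, 'v) isrl \<Rightarrow> 'l list" where
  "ginit IS = map (l0 IS) [0..<Suc (nag IS)]"

definition is_state :: "('l, 'act, 'v) isrl \<Rightarrow> 'l list list \<Rightarrow> bool" where
  "is_state IS s \<longleftrightarrow> s \<noteq> [] \<and> hd s = ginit IS \<and>
     (\<forall>j. Suc j < length s \<longrightarrow> tG IS (s ! j) (s ! Suc j))"

definition tM :: "('l, 'act, 'v) isrl \<Rightarrow> 'l list list \<Rightarrow> 'l list list \<Rightarrow> bool" where
  "tM IS s s' \<longleftrightarrow> is_state IS s \<and> is_state IS s' \<and>
     length s' = Suc (length s) \<and> take (length s) s' = s"

definition simS :: "('l, 'act, 'v) isrl \<Rightarrow> nat \<Rightarrow> 'l list list \<Rightarrow> 'l list list \<Rightarrow> bool" where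
  "simS IS i s s' \<longleftrightarrow> is_state IS s \<and> is_state IS s' \<and> last s ! i = last s' ! i"

text \<open>g of a state is its last global state.\<close>

definition is_interval :: "('l, 'act, 'v) isrl \<Rightarrow> 'l list list list \<Rightarrow> bool" where
  "is_interval IS I \<longleftrightarrow> I \<noteq> [] \<and> (\<forall>s\<in>set I. is_state IS s) \<and>
     (\<forall>j. Suc j < length I \<longrightarrow> tM IS (I ! j) (I ! Suc j))"

definition gI :: "'l list list list \<Rightarrow> 'l list list" where
  "gI I = map last I"

definition simI :: "('l, 'act, 'v) isrl \<Rightarrow> nat \<Rightarrow> 'l list list list \<Rightarrow> 'l list list list \<Rightarrow> bool" where
  "simI IS i I I' \<longleftrightarrow> is_interval IS I \<and> is_interval IS I' \<and> length I = length I' \<and>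
     (\<forall>j<length I. simS IS i (I ! j) (I' ! j))"

datatype modality = MK nat | MC "nat set" | MA | MBbar | MN

datatype 'v form = FPi | FProp 'v | FNeg "'v form" | FAnd "'v form" "'v form"
  | FMod modality "'v form"

primrec agents_mod :: "modality \<Rightarrow> nat set" where
  "agents_mod (MK i) = {i}"
| "agents_mod (MC \<Gamma>) = \<Gamma>"
| "agents_mod MA = {}"
| "agents_mod MBbar = {}"
| "agents_mod MN = {}"

primrec agents_form :: "'v form \<Rightarrow> nat set" where
  "agents_form FPi = {}"
| "agents_form (FProp p) = {}"
| "agents_form (FNeg f) = agents_form f"
| "agents_form (FAnd f g) = agents_form f \<union> agents_form g"
| "agents_form (FMod X f) = agents_mod X \<union> agents_form f"

primrec toplevel :: "'v form \<Rightarrow> (modality \<times> 'v form) set" where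
  "toplevel FPi = {}"
| "toplevel (FProp p) = {}"
| "toplevel (FNeg f) = toplevel f"
| "toplevel (FAnd f g) = toplevel f \<union> toplevel g"
| "toplevel (FMod X f) = {(X, f)}"

lemma toplevel_smaller: "(X, \<psi>) \<in> toplevel \<phi> \<Longrightarrow> size \<psi> < size \<phi>"
  by (induction \<phi>) auto

fun Rel :: "('l, 'act, 'v) isrl \<Rightarrow> modality \<Rightarrow> 'l list list list \<Rightarrow> 'l list list list \<Rightarrow> bool" where
  "Rel IS (MK i) I J = simI IS i I J"
| "Rel IS (MC \<Gamma>) I J = (is_interval IS I \<and> is_interval IS J \<and>
     tranclp (\<lambda>I1 I2. \<exists>i\<in>\<Gamma>. simI IS i I1 I2) I J)"
| "Rel IS MA I J = (is_interval IS I \<and> is_interval IS J \<and> hd J = last I)"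
| "Rel IS MBbar I J = (is_interval IS I \<and> is_interval IS J \<and>
     (\<exists>I1. is_interval IS I1 \<and> J = I @ I1))"
| "Rel IS MN I J = (is_interval IS I \<and> is_interval IS J \<and> tM IS (last I) (hd J))"

record ('q, 'a) dfa =
  dstates :: "'q set"
  dinit :: 'q
  ddelta :: "'q \<Rightarrow> 'a \<Rightarrow> 'q"
  dfinal :: "'q set"

definition complete_dfa :: "'a set \<Rightarrow> ('q, 'a) dfa \<Rightarrow> bool" where
  "complete_dfa \<Sigma> D \<longleftrightarrow> finite (dstates D) \<and> dinit D \<in> dstates D \<and>
     (\<forall>q\<in>dstates D. \<forall>a\<in>\<Sigma>. ddelta D q a \<in> dstates D) \<and> dfinal D \<subseteq> dstates D"

definition dreach :: "('q, 'a) dfa \<Rightarrow> 'a list \<Rightarrow> 'q" where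
  "dreach D w = foldl (ddelta D) (dinit D) w"

definition dlang :: "'a set \<Rightarrow> ('q, 'a) dfa \<Rightarrow> 'a list set" where
  "dlang \<Sigma> D = {w. set w \<subseteq> \<Sigma> \<and> dreach D w \<in> dfinal D}"

text \<open>Minimal complete DFA for L over alphabet Sigma: a complete DFA recognising L
 with no more states than any complete DFA recognising L (every finite DFA is
 isomorphic to one with natural-number states).\<close>

definition minimal_complete_dfa :: "'a set \<Rightarrow> 'a list set \<Rightarrow> ('q, 'a) dfa \<Rightarrow> bool" where
  "minimal_complete_dfa \<Sigma> L D \<longleftrightarrow> complete_dfa \<Sigma> D \<and> dlang \<Sigma> D = L \<and>
     (\<forall>D' :: (nat, 'a) dfa. complete_dfa \<Sigma> D' \<and> dlang \<Sigma> D' = L \<longrightarrow>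
        card (dstates D) \<le> card (dstates D'))"

definition autI :: "('v \<Rightarrow> ('q, 'l list) dfa) \<Rightarrow> 'l list list list \<Rightarrow> 'v \<Rightarrow> 'q" where
  "autI Aut I = (\<lambda>p. dreach (Aut p) (gI I))"

definition mct_root :: "('v \<Rightarrow> ('q, 'l list) dfa) \<Rightarrow> 'l list list list
     \<Rightarrow> 'l list \<times> 'l list \<times> bool \<times> ('v \<Rightarrow> 'q)" where
  "mct_root Aut I = (last (hd I), last (last I), length I = 1, autI Aut I)"

text \<open>mct_eq IS Aut phi I I' expresses MCT_I^phi = MCT_I'^phi, unfolding equality of
 the recursively defined trees: equal root labels and, for each top-level
 sub-formula X psi, equal sets {MCT_J^psi : I R_X J} = {MCT_J'^psi : I' R_X J'}.\<close>

function mct_eq :: "('l, 'act, 'v) isrl \<Rightarrow> ('v \<Rightarrow> ('q, 'l list) dfa) \<Rightarrow> 'v form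
     \<Rightarrow> 'l list list list \<Rightarrow> 'l list list list \<Rightarrow> bool" where
  "mct_eq IS Aut \<phi> I I' \<longleftrightarrow> mct_root Aut I = mct_root Aut I' \<and>
     (\<forall>X \<psi>. (X, \<psi>) \<in> toplevel \<phi> \<longrightarrow>
        (\<forall>J. Rel IS X I J \<longrightarrow> (\<exists>J'. Rel IS X I' J' \<and> mct_eq IS Aut \<psi> J J')) \<and>
        (\<forall>J'. Rel IS X I' J' \<longrightarrow> (\<exists>J. Rel IS X I J \<and> mct_eq IS Aut \<psi> J J')))"
  by pat_completeness auto
termination
  by (relation "measure (\<lambda>(IS, Aut, \<phi>, I, I'). size \<phi>)") (auto dest: toplevel_smaller)

end

theory Submission
  imports Defs
begin

lemma is_state_succ: "is_state IS s \<longleftrightarrow> s \<noteq> [] \<and> hd s = ginit IS \<and> successively (tG IS) s"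
  unfolding is_state_def successively_conv_nth by blast

lemma is_interval_succ: "is_interval IS I \<longleftrightarrow> I \<noteq> [] \<and> (\<forall>s\<in>set I. is_state IS s) \<and> successively (tM IS) I"
  unfolding is_interval_def successively_conv_nth by blast

definition tr :: "'a list \<Rightarrow> 'a list \<Rightarrow> 'a list \<Rightarrow> 'a list" where
  "tr s s' t = s' @ drop (length s) t"

lemma tr_self[simp]: "tr s s' s = s'"
  by (simp add: tr_def)

lemma ext_decomp: "take (length s) t = s \<Longrightarrow> t = s @ drop (length s) t"
  by (metis append_take_drop_id)

lemma tr_last:
  assumes "s \<noteq> []" "s' \<noteq> []" "last s = last s'" "take (length s) t = s"
  shows "last (tr s s' t) = last t"
proof (cases "drop (length s) t = []")
  case True
  then have "t = s" using ext_decomp[OF assms(4)] by simp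
  then show ?thesis using assms by (simp add: tr_def)
next
  case False
  then show ?thesis using ext_decomp[OF assms(4)]
    by (metis last_appendR tr_def)
qed

lemma tr_state:
  assumes "is_state IS s" "is_state IS s'" "last s = last s'" "is_state IS t"
    "take (length s) t = s"
  shows "is_state IS (tr s s' t)"
proof -
  define d where "d = drop (length s) t"
  have t: "t = s @ d" using ext_decomp[OF assms(5)] d_def by simp
  have ss: "s \<noteq> []" "s' \<noteq> []" using assms unfolding is_state_succ by auto
  have st: "successively (tG IS) (s @ d)" using assms(4) t unfolding is_state_succ by simp
  hence "successively (tG IS) d" "d = [] \<or> tG IS (last s) (hd d)"
    using ss by (auto simp: successively_append_iff)
  moreover have "successively (tG IS) s'" "hd s' = ginit IS" using assms(2) unfolding is_state_succ by auto
  ultimately show ?thesis using ss assms(3) unfolding is_state_succ tr_def d_def[symmetric]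
    by (auto simp: successively_append_iff)
qed

lemma tr_tM:
  assumes "is_state IS s" "is_state IS s'" "last s = last s'" "tM IS t1 t2"
    "take (length s) t1 = s" "take (length s) t2 = s"
  shows "tM IS (tr s s' t1) (tr s s' t2)"
proof -
  have l: "length t1 \<ge> length s" using assms(5)
    by (metis length_take min.bounded_iff nle_le)
  have tm: "length t2 = Suc (length t1)" "take (length t1) t2 = t1" "is_state IS t1" "is_state IS t2"
    using assms(4) unfolding tM_def by auto
  have "take (length t1 - length s) (drop (length s) t2) = drop (length s) t1"
    using l tm by (metis drop_take le_add_diff_inverse)
  then show ?thesis using tm l assms tr_state unfolding tM_def tr_def
    by (auto simp: tr_def)
qed

lemma take_trans:
  assumes "take (length a) b = a" "take (length b) c = b"
  shows "take (length a) c = a"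
proof -
  have "length a \<le> length b" using assms(1) by (metis length_take min.bounded_iff nle_le)
  then have "take (length a) c = take (length a) (take (length b) c)" by simp
  then show ?thesis using assms by simp
qed

lemma interval_ext:
  assumes "is_interval IS J" "k < length J"
  shows "take (length (hd J)) (J ! k) = hd J \<and> length (J ! k) = length (hd J) + k"
  using assms(2)
proof (induction k)
  case 0
  then show ?case using assms(1) by (simp add: hd_conv_nth is_interval_def)
next
  case (Suc k)
  have tm: "tM IS (J ! k) (J ! Suc k)" using assms(1) Suc.prems unfolding is_interval_def by blast
  have ih: "take (length (hd J)) (J ! k) = hd J \<and> length (J ! k) = length (hd J) + k"
    using Suc by simp
  have "take (length (J ! k)) (J ! Suc k) = J ! k" using tm unfolding tM_def by auto
  then have "take (length (hd J)) (J ! Suc k) = hd J" using take_trans ih by blast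
  then show ?case using tm ih unfolding tM_def by auto
qed

lemma interval_ext_set:
  assumes "is_interval IS J" "t \<in> set J"
  shows "take (length (hd J)) t = hd J"
  using interval_ext[OF assms(1)] assms(2) by (metis in_set_conv_nth)

lemma transplant:
  assumes "is_state IS s" "is_state IS s'" "last s = last s'" "is_interval IS J"
    "\<forall>t\<in>set J. take (length s) t = s"
  shows "is_interval IS (map (tr s s') J) \<and> gI (map (tr s s') J) = gI J"
proof -
  have ss: "s \<noteq> []" "s' \<noteq> []" using assms unfolding is_state_succ by auto
  have J: "J \<noteq> []" "\<forall>t\<in>set J. is_state IS t" "successively (tM IS) J"
    using assms(4) unfolding is_interval_succ by auto
  have "successively (tM IS) (map (tr s s') J)"
    unfolding successively_map
    by (rule successively_mono[OF J(3)]) (use assms tr_tM in blast)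
  moreover have "\<forall>t\<in>set (map (tr s s') J). is_state IS t"
    using J(2) assms tr_state by fastforce
  moreover have "gI (map (tr s s') J) = gI J"
    unfolding gI_def using tr_last[OF ss assms(3)] assms(5) by simp
  ultimately show ?thesis using J(1) unfolding is_interval_succ by simp
qed

lemma is_interval_append:
  assumes "is_interval IS A" "is_interval IS B" "tM IS (last A) (hd B)"
  shows "is_interval IS (A @ B)"
  using assms unfolding is_interval_succ by (auto simp: successively_append_iff)

lemma simI_transfer:
  assumes "simI IS i I J" "is_interval IS I'" "gI I = gI I'"
  shows "simI IS i I' J"
proof -
  have len: "length I = length I'" using assms(3) unfolding gI_def by (metis length_map)
  have "\<forall>j<length I. last (I ! j) = last (I' ! j)"
    using assms(3) len unfolding gI_def by (metis nth_map)
  then show ?thesis using assms(1,2) len unfolding simI_def simS_def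
    by (auto simp: is_interval_def)
qed

lemma trancl_transfer:
  assumes "tranclp (\<lambda>I1 I2. \<exists>i\<in>\<Gamma>. simI IS i I1 I2) I J" "is_interval IS I'" "gI I = gI I'"
  shows "tranclp (\<lambda>I1 I2. \<exists>i\<in>\<Gamma>. simI IS i I1 I2) I' J"
proof (rule converse_tranclpE[OF assms(1)])
  assume "\<exists>i\<in>\<Gamma>. simI IS i I J"
  then obtain i where "i \<in> \<Gamma>" "simI IS i I J" by auto
  then have "\<exists>i\<in>\<Gamma>. simI IS i I' J" using simI_transfer assms by blast
  then show ?thesis by (rule tranclp.r_into_trancl)
next
  fix y assume a: "\<exists>i\<in>\<Gamma>. simI IS i I y" "tranclp (\<lambda>I1 I2. \<exists>i\<in>\<Gamma>. simI IS i I1 I2) y J"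
  then obtain i where "i \<in> \<Gamma>" "simI IS i I y" by auto
  then have "(\<lambda>I1 I2. \<exists>i\<in>\<Gamma>. simI IS i I1 I2) I' y" using simI_transfer assms by blast
  then show ?thesis using a(2) by (rule tranclp_into_tranclp2)
qed

lemma rel_transfer:
  assumes "Rel IS X I J" "is_interval IS I" "is_interval IS I'" "gI I = gI I'"
  shows "\<exists>J'. Rel IS X I' J' \<and> is_interval IS J \<and> is_interval IS J' \<and> gI J = gI J'"
proof -
  have lastI: "last I \<in> set I" "last I' \<in> set I'" using assms(2,3) unfolding is_interval_def by auto
  have st: "is_state IS (last I)" "is_state IS (last I')" using lastI assms(2,3) unfolding is_interval_def by auto
  have ll: "last (last I) = last (last I')"
    using assms(4) assms(2,3) unfolding gI_def is_interval_def by (metis last_map)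
  show ?thesis
  proof (cases X)
    case (MK i)
    then have "simI IS i I J" using assms by simp
    then have "simI IS i I' J" "is_interval IS J" using simI_transfer[OF _ assms(3,4)]
      by (auto simp: simI_def)
    then show ?thesis using MK by auto
  next
    case (MC \<Gamma>)
    then have "tranclp (\<lambda>I1 I2. \<exists>i\<in>\<Gamma>. simI IS i I1 I2) I J" "is_interval IS J" using assms by auto
    then show ?thesis using MC assms trancl_transfer[OF _ assms(3,4)] by auto
  next
    case MA
    then have J: "is_interval IS J" "hd J = last I" using assms by auto
    have ext: "\<forall>t\<in>set J. take (length (last I)) t = last I" using interval_ext_set[OF J(1)] J(2) by auto
    note T = transplant[OF st ll J(1) ext]
    have "hd (map (tr (last I) (last I')) J) = last I'"
      using J unfolding is_interval_def by (simp add: hd_map)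
    then show ?thesis using T MA assms J by auto
  next
    case MBbar
    then obtain I1 where J: "is_interval IS J" "is_interval IS I1" "J = I @ I1" using assms by auto
    have "tM IS (last I) (hd I1)" using J assms(2) unfolding is_interval_succ
      by (auto simp: successively_append_iff)
    then have h: "take (length (last I)) (hd I1) = last I" unfolding tM_def by auto
    have ext: "\<forall>t\<in>set I1. take (length (last I)) t = last I"
      using interval_ext_set[OF J(2)] take_trans[OF h] by blast
    note T = transplant[OF st ll J(2) ext]
    have ne: "I1 \<noteq> []" using J unfolding is_interval_def by auto
    have "tM IS (tr (last I) (last I') (last I)) (tr (last I) (last I') (hd I1))"
      by (rule tr_tM[OF st ll \<open>tM IS (last I) (hd I1)\<close>]) (use h in auto)
    then have "tM IS (last I') (hd (map (tr (last I) (last I')) I1))" using ne by (simp add: hd_map)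
    then have "is_interval IS (I' @ map (tr (last I) (last I')) I1)"
      using is_interval_append assms(3) T by blast
    moreover have "gI (I' @ map (tr (last I) (last I')) I1) = gI J"
      using T J assms(4) unfolding gI_def by simp
    ultimately show ?thesis using MBbar assms T J
      by (intro exI[of _ "I' @ map (tr (last I) (last I')) I1"]) auto
  next
    case MN
    then have J: "is_interval IS J" "tM IS (last I) (hd J)" using assms by auto
    then have h: "take (length (last I)) (hd J) = last I" unfolding tM_def by auto
    have ext: "\<forall>t\<in>set J. take (length (last I)) t = last I"
      using interval_ext_set[OF J(1)] take_trans[OF h] by blast
    note T = transplant[OF st ll J(1) ext]
    have ne: "J \<noteq> []" using J unfolding is_interval_def by auto
    have "tM IS (tr (last I) (last I') (last I)) (tr (last I) (last I') (hd J))"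
      by (rule tr_tM[OF st ll J(2)]) (use h in auto)
    then have "tM IS (last I') (hd (map (tr (last I) (last I')) J))" using ne by (simp add: hd_map)
    then show ?thesis using MN assms T J
      by (intro exI[of _ "map (tr (last I) (last I')) J"]) auto
  qed
qed

lemma rel_interval: "Rel IS X I J \<Longrightarrow> is_interval IS J"
  by (cases X) (auto simp: simI_def)

lemma main_gen:
  "is_interval IS I \<Longrightarrow> is_interval IS I' \<Longrightarrow> gI I = gI I' \<Longrightarrow> mct_eq IS Aut \<phi> I I'"
proof (induction "size \<phi>" arbitrary: \<phi> I I' rule: less_induct)
  case less
  have root: "mct_root Aut I = mct_root Aut I'"
  proof -
    have "I \<noteq> []" "I' \<noteq> []" using less.prems unfolding is_interval_def by auto
    moreover have "length I = length I'" using less.prems(3) unfolding gI_def by (metis length_map)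
    ultimately show ?thesis using less.prems(3) unfolding mct_root_def autI_def gI_def
      by (simp add: hd_map[symmetric] last_map[symmetric])
  qed
  show ?case
  proof (subst mct_eq.simps, rule conjI[OF root], rule allI, rule allI, rule impI, rule conjI)
    fix X \<psi> assume tl: "(X, \<psi>) \<in> toplevel \<phi>"
    have sm: "size \<psi> < size \<phi>" using toplevel_smaller[OF tl] .
    show "\<forall>J. Rel IS X I J \<longrightarrow> (\<exists>J'. Rel IS X I' J' \<and> mct_eq IS Aut \<psi> J J')"
      using rel_transfer less.prems less.hyps[OF sm] by metis
    show "\<forall>J'. Rel IS X I' J' \<longrightarrow> (\<exists>J. Rel IS X I J \<and> mct_eq IS Aut \<psi> J J')"
    proof (intro allI impI)
      fix J' assume "Rel IS X I' J'"
      then obtain J where "Rel IS X I J" "is_interval IS J" "is_interval IS J'" "gI J' = gI J"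
        using rel_transfer less.prems by metis
      then show "\<exists>J. Rel IS X I J \<and> mct_eq IS Aut \<psi> J J'"
        using less.hyps[OF sm] by metis
    qed
  qed
qed

theorem mainTheorem9:
  fixes IS :: "('l, 'act, 'v) isrl"
    and Aut :: "'v \<Rightarrow> ('q, 'l list) dfa"
    and \<phi> :: "'v form"
    and I I' :: "'l list list list"
  assumes "wf_isrl IS"
    and "\<forall>p. minimal_complete_dfa (Gset IS) (lang (lab IS p)) (Aut p)"
    and "agents_form \<phi> \<subseteq> {0..nag IS}"
    and "is_interval IS I" and "is_interval IS I'"
    and "gI I = gI I'"
  shows "mct_eq IS Aut \<phi> I I'"
  using main_gen assms(4-6) by blast

end
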